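(* Let $n\ge 2$ and let $F(x)=\frac{1}{1+\exp(-x)}$ be the logistic cumulative distribution function. Let $D=(D_{i,j,k})$, $i,j\in\{1,\dots,n\}$, $k\in\{1,2\}$, be nonnegative real data with $D_{i,j,1}=D_{j,i,2}$ for all $i,j$. Let $I$ be a set of ordered pairs $(i,j)$ with $i\neq j$ such that $(i,j)\in I$ if and only if $(j,i)\in I$, and such that $D_{i,j,1}>0$ and $D_{i,j,2}>0$ for all $(i,j)\in I$. Suppose the undirected graph $G_I$ on vertex set $\{1,\dots,n\}$ with an edge $\{i,j\}$ whenever $(i,j)\in I$ is connected. For $(i,j)\in I$ put $h_{i,j}=D_{i,j,2}/D_{i,j,1}$. Then the following are equivalent: (a) for every cycle $(i_1,i_2,\dots,i_k,i_1)$ in $G_I$ (i.e. $(i_l,i_{l+1})\in I$ for $l=1,\dots,k-1$ and $(i_k,i_1)\in I$) one has $h_{i_1,i_2}\cdot h_{i_2,i_3}\cdots h_{i_{k-1},i_k}\cdot h_{i_k,i_1}=1$; (b) there exists $\underline{m}^{(0)}=(0,m_2^{(0)},\dots,m_n^{(0)})\in\mathbb{R}^n$ such that $$\frac{D_{i,j,2}}{D_{i,j,1}}=\frac{F\big(m_i^{(0)}-m_j^{(0)}\big)}{F\big(m_j^{(0)}-m_i^{(0)}\big)}\quad\text{for all }(i,j)\in I.$$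
   Context: In the Bradley–Terry paired comparison model, $D_{i,j,1}$ is the number (or weight) of comparisons with outcome "$i$ is worse than $j$" and $D_{i,j,2}$ the number with outcome "$i$ is better than $j$", so $D_{i,j,1}=D_{j,i,2}$. The data matrix $D$ is called consistent in $I$ when condition (a) holds. *)

theory Defs
  imports "HOL-Analysis.Analysis"
begin

definition logistic :: "real \<Rightarrow> real" where
  "logistic x = 1 / (1 + exp (- x))"

text \<open>Undirected graph G_I on {1..n}: connected iff every two vertices are joined by a
  path of I-steps (I is symmetric).\<close>
definition graph_connected :: "nat \<Rightarrow> (nat \<times> nat) set \<Rightarrow> bool" where
  "graph_connected n I \<longleftrightarrow> (\<forall>i\<in>{1..n}. \<forall>j\<in>{1..n}. (i, j) \<in> I\<^sup>*)"

definition is_cycle :: "(nat \<times> nat) set \<Rightarrow> nat list \<Rightarrow> bool" where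
  "is_cycle I c \<longleftrightarrow> c \<noteq> [] \<and>
     (\<forall>l. Suc l < length c \<longrightarrow> (c ! l, c ! Suc l) \<in> I) \<and>
     (last c, hd c) \<in> I"

definition cycle_prod :: "(nat \<Rightarrow> nat \<Rightarrow> real) \<Rightarrow> nat list \<Rightarrow> real" where
  "cycle_prod h c = (\<Prod>l<length c. h (c ! l) (c ! ((Suc l) mod length c)))"

end

theory Submission
  imports Defs
begin

fun walk :: "(nat \<times> nat) set \<Rightarrow> nat list \<Rightarrow> bool" where
  "walk I (a # b # xs) = ((a, b) \<in> I \<and> walk I (b # xs))"
| "walk I _ = True"

fun wt :: "(nat \<Rightarrow> nat \<Rightarrow> real) \<Rightarrow> nat list \<Rightarrow> real" where
  "wt L (a # b # xs) = L a b + wt L (b # xs)"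
| "wt L _ = 0"

lemma wt_app: "wt L (xs @ y # ys) = wt L (xs @ [y]) + wt L (y # ys)"
proof (induction xs)
  case Nil then show ?case by simp
next
  case (Cons a xs) then show ?case by (cases xs) auto
qed

lemma walk_app: "walk I (xs @ y # ys) = (walk I (xs @ [y]) \<and> walk I (y # ys))"
proof (induction xs)
  case Nil then show ?case by simp
next
  case (Cons a xs) then show ?case by (cases xs) auto
qed

lemma walk_rev_wt:
  "(\<forall>a b. (a, b) \<in> I \<longrightarrow> (b, a) \<in> I \<and> L b a = - L a b) \<Longrightarrow>
   walk I q \<Longrightarrow> walk I (rev q) \<and> wt L (rev q) = - wt L q"
proof (induction I q rule: walk.induct)
  case (1 I a b xs)
  from 1(3) have ab: "(a, b) \<in> I" and w: "walk I (b # xs)" by simp_all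
  from 1(1)[OF 1(2) w] have ih: "walk I (rev xs @ [b])"
    "wt L (rev xs @ [b]) = - wt L (b # xs)" by simp_all
  from 1(2) ab have s: "(b, a) \<in> I" "L b a = - L a b" by blast+
  have e: "rev (a # b # xs) = rev xs @ b # [a]" by simp
  have "walk I (rev xs @ b # [a]) = (walk I (rev xs @ [b]) \<and> walk I [b, a])"
    by (rule walk_app)
  moreover have "wt L (rev xs @ b # [a]) = wt L (rev xs @ [b]) + wt L [b, a]"
    by (rule wt_app)
  ultimately show ?case unfolding e using ih s ab by simp
next
  case ("2_1" I) then show ?case by simp
next
  case ("2_2" I v) then show ?case by simp
qed

lemma wt_idx: "wt L xs = (\<Sum>l<length xs - 1. L (xs ! l) (xs ! Suc l))"
proof (induction L xs rule: wt.induct)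
  case (1 L a b xs)
  then show ?case by (simp add: sum.lessThan_Suc_shift del: sum.lessThan_Suc)
qed auto

lemma walk_idx: "walk I xs = (\<forall>l. Suc l < length xs \<longrightarrow> (xs ! l, xs ! Suc l) \<in> I)"
proof (induction I xs rule: walk.induct)
  case (1 I a b xs)
  then show ?case by (auto simp: less_Suc_eq_0_disj)
qed auto

lemma cyc_shift: "(\<Sum>l<k. f (Suc l mod k)) = (\<Sum>l<k. (f l :: real))"
proof (cases k)
  case 0 then show ?thesis by simp
next
  case (Suc k')
  have "(\<Sum>l<Suc k'. f (Suc l mod Suc k')) = (\<Sum>l<k'. f (Suc l mod Suc k')) + f 0"
    by simp
  also have "(\<Sum>l<k'. f (Suc l mod Suc k')) = (\<Sum>l<k'. f (Suc l))"
    by (rule sum.cong) auto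
  also have "\<dots> + f 0 = (\<Sum>l<Suc k'. f l)"
    by (simp add: sum.lessThan_Suc_shift del: sum.lessThan_Suc)
  finally show ?thesis using Suc by simp
qed

lemma logistic_ratio: "logistic x / logistic (- x) = exp x"
proof -
  have p: "1 + exp x > 0" by (simp add: add_pos_pos)
  show ?thesis unfolding logistic_def using p
    by (simp add: exp_minus field_simps)
qed

lemma walk_snoc: "p \<noteq> [] \<Longrightarrow> walk I (p @ [z]) = (walk I p \<and> (last p, z) \<in> I)"
proof -
  assume "p \<noteq> []"
  then have e: "p = butlast p @ [last p]" by simp
  have "walk I (butlast p @ last p # [z]) = (walk I (butlast p @ [last p]) \<and> walk I [last p, z])"
    by (rule walk_app)
  then show ?thesis using e by (metis append.assoc append_Cons append_Nil walk.simps(1,3))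
qed

lemma wt_snoc: "p \<noteq> [] \<Longrightarrow> wt L (p @ [z]) = wt L p + L (last p) z"
proof -
  assume "p \<noteq> []"
  then have e: "p = butlast p @ [last p]" by simp
  have "wt L (butlast p @ last p # [z]) = wt L (butlast p @ [last p]) + wt L [last p, z]"
    by (rule wt_app)
  then show ?thesis using e by (metis append.assoc append_Cons append_Nil wt.simps(1,3) add_0_right)
qed

lemma closed_walk:
  assumes w: "walk I w" and len: "2 \<le> length w" and hl: "hd w = last w"
    and he: "\<forall>a b. (a, b) \<in> I \<longrightarrow> h a b = exp (L a b)"
  shows "is_cycle I (butlast w) \<and> cycle_prod h (butlast w) = exp (wt L w)"
proof -
  define c where "c = butlast w"
  define k where "k = length c"
  have k: "k = length w - 1" "k \<ge> 1" using len by (auto simp: k_def c_def)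
  have wn: "w \<noteq> []" using len by auto
  have wl: "\<And>l. l < k \<Longrightarrow> w ! l = c ! l" by (simp add: c_def k_def nth_butlast)
  have wk: "w ! k = c ! 0"
  proof -
    have "w ! k = last w" using wn k by (simp add: last_conv_nth)
    also have "\<dots> = hd w" using hl by simp
    also have "\<dots> = w ! 0" using wn by (simp add: hd_conv_nth)
    also have "\<dots> = c ! 0" using wl k by simp
    finally show ?thesis .
  qed
  have ws: "\<And>l. l < k \<Longrightarrow> w ! Suc l = c ! (Suc l mod k)"
  proof -
    fix l assume "l < k"
    show "w ! Suc l = c ! (Suc l mod k)"
    proof (cases "Suc l < k")
      case True then show ?thesis using wl by simp
    next
      case False then have "Suc l = k" using \<open>l < k\<close> by simp
      then show ?thesis using wk by simp
    qed
  qed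
  have wI: "\<And>l. Suc l < length w \<Longrightarrow> (w ! l, w ! Suc l) \<in> I" using w by (simp add: walk_idx)
  have cyc: "is_cycle I c"
    unfolding is_cycle_def
  proof (intro conjI allI impI)
    show "c \<noteq> []" using k k_def by auto
  next
    fix l assume "Suc l < length c"
    then show "(c ! l, c ! Suc l) \<in> I" using wI[of l] wl[of l] wl[of "Suc l"] k k_def by simp
  next
    have cn: "c \<noteq> []" using k k_def by auto
    have "last c = c ! (k - 1)" using cn k_def by (simp add: last_conv_nth)
    then have "last c = w ! (k - 1)" using k wl[of "k - 1"] by simp
    moreover have "hd c = w ! Suc (k - 1)"
    proof -
      have "hd c = c ! 0" using cn by (simp add: hd_conv_nth)
      also have "\<dots> = w ! k" using wk by simp
      also have "k = Suc (k - 1)" using k by simp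
      finally show ?thesis .
    qed
    ultimately show "(last c, hd c) \<in> I" using wI[of "k - 1"] k by simp
  qed
  have "cycle_prod h c = (\<Prod>l<k. h (w ! l) (w ! Suc l))"
    unfolding cycle_prod_def k_def[symmetric] by (rule prod.cong) (simp_all add: wl ws)
  also have "\<dots> = (\<Prod>l<k. exp (L (w ! l) (w ! Suc l)))"
    by (rule prod.cong) (use he wI k in auto)
  also have "\<dots> = exp (\<Sum>l<k. L (w ! l) (w ! Suc l))" by (simp add: exp_sum)
  also have "\<dots> = exp (wt L w)" by (simp add: wt_idx k)
  finally show ?thesis using cyc c_def by simp
qed

lemma walk_exists:
  assumes "(a, i) \<in> I\<^sup>*"
  shows "\<exists>p. p \<noteq> [] \<and> hd p = a \<and> last p = i \<and> walk I p"
  using assms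
proof (induction rule: rtrancl_induct)
  case base
  then show ?case by (intro exI[of _ "[a]"]) simp
next
  case (step y z)
  then obtain p where p: "p \<noteq> []" "hd p = a" "last p = y" "walk I p" by blast
  then show ?case using step(2) by (intro exI[of _ "p @ [z]"]) (simp add: walk_snoc)
qed

theorem theorem2:
  fixes n :: nat and D :: "nat \<Rightarrow> nat \<Rightarrow> nat \<Rightarrow> real" and I :: "(nat \<times> nat) set"
  assumes n2: "n \<ge> 2"
    and D_nonneg: "\<forall>i\<in>{1..n}. \<forall>j\<in>{1..n}. \<forall>k\<in>{1,2}. D i j k \<ge> 0"
    and D_sym: "\<forall>i\<in>{1..n}. \<forall>j\<in>{1..n}. D i j 1 = D j i 2"
    and I_sub: "I \<subseteq> {1..n} \<times> {1..n}"
    and I_irrefl: "\<forall>(i, j)\<in>I. i \<noteq> j"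
    and I_sym: "\<forall>i j. (i, j) \<in> I \<longleftrightarrow> (j, i) \<in> I"
    and I_pos: "\<forall>(i, j)\<in>I. D i j 1 > 0 \<and> D i j 2 > 0"
    and conn: "graph_connected n I"
  shows "(\<forall>c. is_cycle I c \<longrightarrow> cycle_prod (\<lambda>i j. D i j 2 / D i j 1) c = 1)
     \<longleftrightarrow> (\<exists>m :: nat \<Rightarrow> real. m 1 = 0 \<and>
            (\<forall>(i, j)\<in>I. D i j 2 / D i j 1 = logistic (m i - m j) / logistic (m j - m i)))"
proof -
  define h where "h = (\<lambda>i j. D i j 2 / D i j 1)"
  define L where "L = (\<lambda>i j. ln (h i j))"
  have hpos: "\<And>a b. (a, b) \<in> I \<Longrightarrow> h a b > 0" using I_pos by (auto simp: h_def)
  have he: "\<forall>a b. (a, b) \<in> I \<longrightarrow> h a b = exp (L a b)" using hpos by (simp add: L_def)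
  have anti: "\<forall>a b. (a, b) \<in> I \<longrightarrow> (b, a) \<in> I \<and> L b a = - L a b"
  proof (intro allI impI conjI)
    fix a b assume ab: "(a, b) \<in> I"
    then show "(b, a) \<in> I" using I_sym by blast
    have ab': "a \<in> {1..n}" "b \<in> {1..n}" using ab I_sub by auto
    have p1: "D a b 1 > 0" "D a b 2 > 0" using ab I_pos by auto
    have "D b a 2 = D a b 1" "D b a 1 = D a b 2" using D_sym ab' by auto
    then have "L b a = ln (D a b 1) - ln (D a b 2)" using p1 by (simp add: L_def h_def ln_div)
    moreover have "L a b = ln (D a b 2) - ln (D a b 1)" using p1 by (simp add: L_def h_def ln_div)
    ultimately show "L b a = - L a b" by simp
  qed
  have closed0: "wt L w = 0" if cyc: "\<forall>c. is_cycle I c \<longrightarrow> cycle_prod h c = 1"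
    and w: "walk I w" "hd w = last w" for w
  proof (cases "2 \<le> length w")
    case True
    from closed_walk[OF w(1) True w(2) he] cyc have "exp (wt L w) = 1" by metis
    then show ?thesis by simp
  next
    case False
    then show ?thesis by (simp add: wt_idx)
  qed
  show ?thesis unfolding h_def[symmetric]
  proof
    assume cyc: "\<forall>c. is_cycle I c \<longrightarrow> cycle_prod h c = 1"
    have uniq: "wt L p = wt L q" if p: "p \<noteq> []" "hd p = 1" "last p = i" "walk I p"
      and q: "q \<noteq> []" "hd q = 1" "last q = i" "walk I q" for p q i
    proof -
      have "rev q \<noteq> []" "hd (rev q) = i" using q by (simp_all add: hd_rev)
      then obtain r where r: "rev q = i # r" by (metis list.collapse)
      define w where "w = butlast p @ i # r"
      have pe: "butlast p @ [i] = p" using p(1) p(3) by (metis append_butlast_last_id)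
      have rq: "walk I (rev q) \<and> wt L (rev q) = - wt L q" using walk_rev_wt[OF anti q(4)] .
      have "walk I w = (walk I (butlast p @ [i]) \<and> walk I (i # r))" unfolding w_def by (rule walk_app)
      then have ww: "walk I w" using pe rq r p(4) by metis
      have "wt L w = wt L (butlast p @ [i]) + wt L (i # r)" unfolding w_def by (rule wt_app)
      then have wtw: "wt L w = wt L p - wt L q" using pe rq r by (metis diff_conv_add_uminus)
      have "last w = last (rev q)" unfolding w_def r by simp
      then have lw: "last w = 1" using q by (simp add: last_rev)
      have "hd w = 1"
      proof (cases "butlast p = []")
        case True
        then have "w = i # r" unfolding w_def by simp
        moreover have "p = [i]" using pe True by (metis append_Nil)
        ultimately show ?thesis using p(2) by simp
      next
        case False
        then have "hd w = hd (butlast p)" unfolding w_def by simp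
        also have "\<dots> = hd (butlast p @ [i])" using False by (simp add: hd_append)
        also have "\<dots> = 1" using pe p(2) by simp
        finally show ?thesis .
      qed
      then have hl: "hd w = last w" using lw by (rule trans[OF _ sym])
      have "wt L w = 0" by (rule closed0[OF cyc ww hl])
      then show ?thesis using wtw by linarith
    qed
    define P where "P = (\<lambda>i. SOME p. p \<noteq> [] \<and> hd p = 1 \<and> last p = i \<and> walk I p)"
    have P: "P i \<noteq> [] \<and> hd (P i) = 1 \<and> last (P i) = i \<and> walk I (P i)" if "i \<in> {1..n}" for i
    proof -
      have "1 \<in> {1..n}" using n2 by simp
      then have "(1, i) \<in> I\<^sup>*" using conn that unfolding graph_connected_def by blast
      from walk_exists[OF this] show ?thesis unfolding P_def by (rule someI_ex)
    qed
    define m where "m = (\<lambda>i. - wt L (P i))"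
    have "m 1 = 0"
    proof -
      have one: "1 \<in> {1..n}" using n2 by simp
      have P1: "P 1 \<noteq> []" "hd (P 1) = 1" "last (P 1) = 1" "walk I (P 1)" using P[OF one] by simp_all
      have "[1::nat] \<noteq> []" "hd [1::nat] = 1" "last [1::nat] = 1" "walk I [1]" by simp_all
      from uniq[OF P1 this] have "wt L (P 1) = wt L [1]" .
      then show ?thesis by (simp add: m_def)
    qed
    moreover have "\<forall>(i, j)\<in>I. h i j = logistic (m i - m j) / logistic (m j - m i)"
    proof (clarify)
      fix i j assume ij: "(i, j) \<in> I"
      have ij': "i \<in> {1..n}" "j \<in> {1..n}" using ij I_sub by auto
      have Pi: "P i @ [j] \<noteq> []" "hd (P i @ [j]) = 1" "last (P i @ [j]) = j" "walk I (P i @ [j])"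
        using P[OF ij'(1)] ij by (auto simp: walk_snoc)
      have "wt L (P j) = wt L (P i @ [j])" using P[OF ij'(2)] by (intro uniq[OF _ _ _ _ Pi]) simp_all
      also have "\<dots> = wt L (P i) + L i j" using P[OF ij'(1)] by (simp add: wt_snoc)
      finally have "L i j = m i - m j" by (simp add: m_def)
      then have "h i j = exp (m i - m j)" using he ij by simp
      also have "\<dots> = logistic (m i - m j) / logistic (- (m i - m j))" by (rule logistic_ratio[symmetric])
      finally show "h i j = logistic (m i - m j) / logistic (m j - m i)" by simp
    qed
    ultimately show "\<exists>m. m 1 = 0 \<and> (\<forall>(i, j)\<in>I. D i j 2 / D i j 1 = logistic (m i - m j) / logistic (m j - m i))"
      unfolding h_def by blast
  next
    assume "\<exists>m. m 1 = 0 \<and> (\<forall>(i, j)\<in>I. D i j 2 / D i j 1 = logistic (m i - m j) / logistic (m j - m i))"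
    then obtain m where m: "\<forall>(i, j)\<in>I. h i j = logistic (m i - m j) / logistic (m j - m i)" unfolding h_def by blast
    have hm: "h a b = exp (m a - m b)" if "(a, b) \<in> I" for a b
    proof -
      have "h a b = logistic (m a - m b) / logistic (- (m a - m b))" using m that by auto
      then show ?thesis by (simp only: logistic_ratio)
    qed
    show "\<forall>c. is_cycle I c \<longrightarrow> cycle_prod h c = 1"
    proof (intro allI impI)
      fix c assume c: "is_cycle I c"
      define k where "k = length c"
      have k: "k \<ge> 1" using c by (simp add: is_cycle_def k_def Suc_le_eq)
      have inI: "(c ! l, c ! (Suc l mod k)) \<in> I" if "l < k" for l
      proof (cases "Suc l < k")
        case True then show ?thesis using c by (simp add: is_cycle_def k_def)
      next
        case False
        then have "Suc l = k" using that by simp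
        moreover have "c ! l = last c" using \<open>Suc l = k\<close> k unfolding k_def by (metis diff_Suc_1 last_conv_nth list.size(3) nat.simps(3))
        moreover have "c ! 0 = hd c" using k unfolding k_def by (metis hd_conv_nth list.size(3) not_one_le_zero)
        ultimately show ?thesis using c by (simp add: is_cycle_def)
      qed
      have "cycle_prod h c = (\<Prod>l<k. exp (m (c ! l) - m (c ! (Suc l mod k))))"
        unfolding cycle_prod_def k_def[symmetric] by (rule prod.cong) (simp_all add: hm inI)
      also have "\<dots> = exp (\<Sum>l<k. m (c ! l) - m (c ! (Suc l mod k)))" by (simp add: exp_sum)
      also have "(\<Sum>l<k. m (c ! l) - m (c ! (Suc l mod k))) = 0"
        using cyc_shift[of "\<lambda>l. m (c ! l)" k] by (simp add: sum_subtractf)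
      finally show "cycle_prod h c = 1" by simp
    qed
  qed
qed

end
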